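(* Let $g:\mathbb{R}^d\to\mathbb{R}^M$ be an $L$-layer $\ell_\infty$-dist net (defined in the context) and $f(x)=\arg\max_{i\in[M]}g_i(x)$, where ties are resolved so that for an example $(x,y)$, $f(x')=y$ holds only if $g_y(x')>g_i(x')$ for all $i\neq y$. Let $\mathcal{D}$ be a distribution on $\mathbb{R}^d\times[M]$ with $\mathcal{R}_{\mathtt{nat}}(f,\mathcal{D})>0$, and let $\epsilon>0$, with the hypocritical risk taken with respect to the $\ell_\infty$-norm. Then $$\mathcal{R}_{\mathtt{hyp}}(f,\mathcal{D}_f^-)\le\mathbb{E}_{(x,y)\sim\mathcal{D}_f^-}\Bigl[\mathds{1}\bigl(\max_{i}g_i(x)-g_y(x)<2\epsilon\bigr)\Bigr].$$
   Context: $[M]=\{1,\dots,M\}$. An $L$-layer $\ell_\infty$-dist net is defined by widths $d_0=d,d_1,\dots,d_L=M$, weights $w^{(l,k)}\in\mathbb{R}^{d_{l-1}}$ and biases $b^{(l,k)}\in\mathbb{R}$ for $1\le l\le L$, $1\le k\le d_l$; with $x^{(0)}=x$, set $x^{(l)}_k=\|x^{(l-1)}-w^{(l,k)}\|_\infty+b^{(l,k)}$ and $x^{(l)}=(x^{(l)}_1,\dots,x^{(l)}_{d_l})$, and finally $g(x)=(-x^{(L)}_1,\dots,-x^{(L)}_M)$. Natural risk: $\mathcal{R}_{\mathtt{nat}}(f,\mathcal{P})=\mathbb{E}_{(x,y)\sim\mathcal{P}}[\mathds{1}(f(x)\neq y)]$. Hypocritical risk under the $\ell_\infty$ threat model: $\mathcal{R}_{\mathtt{hyp}}(f,\mathcal{P})=\mathbb{E}_{(x,y)\sim\mathcal{P}}\bigl[\sup_{\|x'-x\|_\infty\le\epsilon}\mathds{1}(f(x')=y)\bigr]$.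 $\mathcal{D}_f^-$ denotes the conditional distribution of $(x,y)\sim\mathcal{D}$ given the event $f(x)\neq y$ (misclassified examples). All indicator functions are assumed measurable. *)

theory Defs
  imports "HOL-Probability.Probability"
begin

(* Vectors of R^n are represented as nat => real, only coordinates 0..<n matter. *)
definition linf :: "nat \<Rightarrow> (nat \<Rightarrow> real) \<Rightarrow> real" where
  "linf n v = Max (insert 0 ((\<lambda>i. \<bar>v i\<bar>) ` {..<n}))"

(* x^(l) of an l_inf-dist net with widths ws = [d_0,...,d_L],
   weights W l k (layer l >= 1, neuron k < d_l, a vector in R^{d_(l-1)}), biases b l k *)
fun dist_layers :: "nat list \<Rightarrow> (nat \<Rightarrow> nat \<Rightarrow> nat \<Rightarrow> real) \<Rightarrow> (nat \<Rightarrow> nat \<Rightarrow> real)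
      \<Rightarrow> nat \<Rightarrow> (nat \<Rightarrow> real) \<Rightarrow> (nat \<Rightarrow> real)" where
  "dist_layers ws W b 0 x = x"
| "dist_layers ws W b (Suc l) x =
     (\<lambda>k. linf (ws ! l) (\<lambda>i. dist_layers ws W b l x i - W (Suc l) k i) + b (Suc l) k)"

(* g(x) = -x^(L), L = length ws - 1; labels/outputs indexed 0..<M *)
definition dist_net :: "nat list \<Rightarrow> (nat \<Rightarrow> nat \<Rightarrow> nat \<Rightarrow> real) \<Rightarrow> (nat \<Rightarrow> nat \<Rightarrow> real)
      \<Rightarrow> (nat \<Rightarrow> real) \<Rightarrow> nat \<Rightarrow> real" where
  "dist_net ws W b x i = - dist_layers ws W b (length ws - 1) x i"

definition nat_risk :: "((nat \<Rightarrow> real) \<Rightarrow> nat) \<Rightarrow> ((nat \<Rightarrow> real) \<times> nat) measure \<Rightarrow> real" where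
  "nat_risk f P = (\<integral>z. of_bool (f (fst z) \<noteq> snd z) \<partial>P)"

definition hyp_risk :: "nat \<Rightarrow> real \<Rightarrow> ((nat \<Rightarrow> real) \<Rightarrow> nat) \<Rightarrow> ((nat \<Rightarrow> real) \<times> nat) measure \<Rightarrow> real" where
  "hyp_risk d eps f P =
     (\<integral>z. of_bool (\<exists>x'. linf d (\<lambda>i. x' i - fst z i) \<le> eps \<and> f x' = snd z) \<partial>P)"

definition misclassified :: "((nat \<Rightarrow> real) \<Rightarrow> nat) \<Rightarrow> ((nat \<Rightarrow> real) \<times> nat) measure
      \<Rightarrow> ((nat \<Rightarrow> real) \<times> nat) set" where
  "misclassified f P = {z \<in> space P. f (fst z) \<noteq> snd z}"

definition cond_mis :: "((nat \<Rightarrow> real) \<Rightarrow> nat) \<Rightarrow> ((nat \<Rightarrow> real) \<times> nat) measure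
      \<Rightarrow> ((nat \<Rightarrow> real) \<times> nat) measure" where
  "cond_mis f P = uniform_measure P (misclassified f P)"

end

theory Submission
  imports Defs
begin

lemma linf_nonneg: "0 \<le> linf n v"
  unfolding linf_def by (rule Max_ge) auto

lemma linf_ge: "i < n \<Longrightarrow> \<bar>v i\<bar> \<le> linf n v"
  unfolding linf_def by (rule Max_ge) auto

lemma linf_le: "0 \<le> c \<Longrightarrow> (\<And>i. i < n \<Longrightarrow> \<bar>v i\<bar> \<le> c) \<Longrightarrow> linf n v \<le> c"
  unfolding linf_def by (subst Max_le_iff) auto

lemma linf_tri: "linf n u \<le> linf n v + linf n (\<lambda>i. u i - v i)"
proof (rule linf_le)
  show "0 \<le> linf n v + linf n (\<lambda>i. u i - v i)" using linf_nonneg[of n v] linf_nonneg[of n "\<lambda>i. u i - v i"] by simp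
  fix i assume "i < n"
  hence "\<bar>v i\<bar> \<le> linf n v" "\<bar>u i - v i\<bar> \<le> linf n (\<lambda>i. u i - v i)"
    using linf_ge[of i n] by auto
  thus "\<bar>u i\<bar> \<le> linf n v + linf n (\<lambda>i. u i - v i)" by linarith
qed

lemma layers_lip:
  assumes "ws ! 0 = d"
  shows "l < length ws \<Longrightarrow> (l = 0 \<longrightarrow> k < d) \<Longrightarrow>
    \<bar>dist_layers ws W b l x k - dist_layers ws W b l x' k\<bar> \<le> linf d (\<lambda>i. x i - x' i)"
proof (induction l arbitrary: k)
  case 0
  then show ?case using linf_ge[of k d "\<lambda>i. x i - x' i"] by simp
next
  case (Suc l)
  let ?u = "\<lambda>i. dist_layers ws W b l x i - W (Suc l) k i"
  let ?v = "\<lambda>i. dist_layers ws W b l x' i - W (Suc l) k i"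
  have h: "linf (ws ! l) (\<lambda>i. ?u i - ?v i) \<le> linf d (\<lambda>i. x i - x' i)"
  proof (rule linf_le)
    show "0 \<le> linf d (\<lambda>i. x i - x' i)" by (rule linf_nonneg)
    fix i assume "i < ws ! l"
    hence "l = 0 \<longrightarrow> i < d" using assms by auto
    from Suc.IH[OF _ this] Suc.prems show "\<bar>?u i - ?v i\<bar> \<le> linf d (\<lambda>i. x i - x' i)" by simp
  qed
  have "linf (ws ! l) ?u \<le> linf (ws ! l) ?v + linf (ws ! l) (\<lambda>i. ?u i - ?v i)" by (rule linf_tri)
  moreover have "linf (ws ! l) ?v \<le> linf (ws ! l) ?u + linf (ws ! l) (\<lambda>i. ?u i - ?v i)"
  proof -
    have "linf (ws ! l) ?v \<le> linf (ws ! l) ?u + linf (ws ! l) (\<lambda>i. ?v i - ?u i)" by (rule linf_tri)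
    moreover have "linf (ws ! l) (\<lambda>i. ?v i - ?u i) = linf (ws ! l) (\<lambda>i. ?u i - ?v i)"
      unfolding linf_def by (simp add: abs_minus_commute)
    ultimately show ?thesis by simp
  qed
  ultimately show ?case using h by simp
qed

lemma net_lip:
  assumes "ws ! 0 = d" "length ws \<ge> 2"
  shows "\<bar>dist_net ws W b x k - dist_net ws W b x' k\<bar> \<le> linf d (\<lambda>i. x i - x' i)"
proof -
  have "\<bar>dist_layers ws W b (length ws - 1) x k - dist_layers ws W b (length ws - 1) x' k\<bar> \<le> linf d (\<lambda>i. x i - x' i)"
    by (rule layers_lip[OF assms(1)]) (use assms(2) in auto)
  thus ?thesis unfolding dist_net_def by simp
qed

theorem corollary1:
  fixes ws :: "nat list" and W :: "nat \<Rightarrow> nat \<Rightarrow> nat \<Rightarrow> real" and b :: "nat \<Rightarrow> nat \<Rightarrow> real"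
    and d M :: nat and f :: "(nat \<Rightarrow> real) \<Rightarrow> nat"
    and D :: "((nat \<Rightarrow> real) \<times> nat) measure" and eps :: real
  assumes "length ws \<ge> 2" and "ws ! 0 = d" and "last ws = M"
    and "\<forall>l < length ws. 0 < ws ! l"
    and f_argmax: "\<forall>x y. y < M \<longrightarrow> (\<forall>i<M. i \<noteq> y \<longrightarrow> dist_net ws W b x i < dist_net ws W b x y)
                     \<longrightarrow> f x = y"
    and f_tie: "\<forall>x y. y < M \<longrightarrow> f x = y
                     \<longrightarrow> (\<forall>i<M. i \<noteq> y \<longrightarrow> dist_net ws W b x i < dist_net ws W b x y)"
    and "prob_space D" and "space D \<subseteq> UNIV \<times> {..<M}"
    and "misclassified f D \<in> sets D"
    and "(\<lambda>z. of_bool (\<exists>x'. linf d (\<lambda>i. x' i - fst z i) \<le> eps \<and> f x' = snd z) :: real)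
           \<in> borel_measurable D"
    and "(\<lambda>z. of_bool (Max ((\<lambda>i. dist_net ws W b (fst z) i) ` {..<M})
                        - dist_net ws W b (fst z) (snd z) < 2 * eps) :: real) \<in> borel_measurable D"
    and "eps > 0" and "nat_risk f D > 0"
  shows "hyp_risk d eps f (cond_mis f D)
     \<le> (\<integral>z. of_bool (Max ((\<lambda>i. dist_net ws W b (fst z) i) ` {..<M})
                        - dist_net ws W b (fst z) (snd z) < 2 * eps) \<partial>(cond_mis f D))"
proof -
  let ?A = "misclassified f D"
  let ?g = "dist_net ws W b"
  interpret P: prob_space D by fact
  have nr: "nat_risk f D = measure D ?A"
  proof -
    have "nat_risk f D = (\<integral>z. indicator ?A z \<partial>D)"
      unfolding nat_risk_def by (rule Bochner_Integration.integral_cong) (auto simp: misclassified_def indicator_def)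
    also have "\<dots> = measure D ?A" using assms(9) by simp
    finally show ?thesis .
  qed
  have e0: "emeasure D ?A \<noteq> 0" using assms(13) nr P.emeasure_eq_measure by auto
  have ef: "emeasure D ?A \<noteq> \<infinity>" by simp
  interpret U: prob_space "cond_mis f D"
    unfolding cond_mis_def by (rule prob_space_uniform_measure[OF e0 ef])
  have sp: "space (cond_mis f D) = space D" unfolding cond_mis_def by simp
  have ms: "borel_measurable (cond_mis f D) = borel_measurable D"
    unfolding cond_mis_def by (rule measurable_cong_sets) auto
  have pw: "of_bool (\<exists>x'. linf d (\<lambda>i. x' i - fst z i) \<le> eps \<and> f x' = snd z)
      \<le> (of_bool (Max (?g (fst z) ` {..<M}) - ?g (fst z) (snd z) < 2 * eps) :: real)"
    if zs: "z \<in> space D" for z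
  proof (cases "\<exists>x'. linf d (\<lambda>i. x' i - fst z i) \<le> eps \<and> f x' = snd z")
    case False then show ?thesis by (simp only: of_bool_eq) auto
  next
    case True
    then obtain x' where x': "linf d (\<lambda>i. x' i - fst z i) \<le> eps" "f x' = snd z" by blast
    obtain x y where z: "z = (x, y)" by force
    have yM: "y < M" using zs assms(8) z by auto
    have gt: "\<forall>i<M. i \<noteq> y \<longrightarrow> ?g x' i < ?g x' y" using f_tie yM x' z by auto
    have lip: "\<bar>?g x' k - ?g x k\<bar> \<le> eps" for k
      using net_lip[OF assms(2) assms(1), of W b x' k x] x'(1) z by simp
    have fin: "finite (?g x ` {..<M})" "?g x ` {..<M} \<noteq> {}" using yM by auto
    obtain j where j: "j < M" "Max (?g x ` {..<M}) = ?g x j"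
      using Max_in[OF fin] by auto
    have "?g x j - ?g x y < 2 * eps"
    proof (cases "j = y")
      case True then show ?thesis using assms(12) by simp
    next
      case False
      hence "?g x' j < ?g x' y" using gt j by auto
      moreover have "\<bar>?g x' j - ?g x j\<bar> \<le> eps" "\<bar>?g x' y - ?g x y\<bar> \<le> eps" using lip by auto
      ultimately show ?thesis by linarith
    qed
    then show ?thesis using z j by simp
  qed
  show ?thesis unfolding hyp_risk_def
  proof (rule integral_mono_AE)
    show "integrable (cond_mis f D) (\<lambda>z. of_bool (\<exists>x'. linf d (\<lambda>i. x' i - fst z i) \<le> eps \<and> f x' = snd z) :: real)"
      by (rule U.integrable_const_bound[where B=1]) (use assms(10) ms in auto)
    show "integrable (cond_mis f D) (\<lambda>z. of_bool (Max (?g (fst z) ` {..<M}) - ?g (fst z) (snd z) < 2 * eps) :: real)"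
      by (rule U.integrable_const_bound[where B=1]) (use assms(11) ms in auto)
    show "AE z in cond_mis f D. of_bool (\<exists>x'. linf d (\<lambda>i. x' i - fst z i) \<le> eps \<and> f x' = snd z)
      \<le> (of_bool (Max (?g (fst z) ` {..<M}) - ?g (fst z) (snd z) < 2 * eps) :: real)"
      using pw sp by (intro AE_I2) auto
  qed
qed

end
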